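(* Let $(S,* )$ be a finite multisemigroup containing two different elements $a$ and $b$ such that $a*a=\{a\}$ and either $\{a,b\}\subseteq a*b$ or $\{a,b\}\subseteq b*a$. Then $(S,* )$ does not admit any deformation.
   Context: A multisemigroup is a set $S$ with a map $*:S\times S\to 2^S$ such that $\bigcup_{s\in x*y}s*z=\bigcup_{t\in y*z}x*t$ for all $x,y,z\in S$. A finitary multisemigroup with multiplicities on a non-empty set $S$ is a map $\mu:S\times S\to\{\text{functions }S\to\mathrm{Card}_{\aleph_0}\}$ (where $\mathrm{Card}_{\aleph_0}$ is the set of cardinals $\le\aleph_0$ with truncated cardinal arithmetic), $(s,t)\mapsto\mu_{s,t}$, such that every value $\mu_{r,s}(t)$ is finite, $\{t:\mu_{r,s}(t)\neq0\}$ is finite for all $r,s$, and for all $r,s,t\in S$: $\sum_{i\in S}\mu_{s,t}(i)\mu_{r,i}=\sum_{j\in S}\mu_{r,s}(j)\mu_{j,t}$ as functions on $S$ (where $\lambda\nu$ is the pointwise sum of $\lambda$ copies of $\nu$). A deformation of a finite multisemigroup $(S,* )$ is a finitary multisemigroup with multiplicities $(S,\mu)$ such that for all $x,y,z\in S$: $z\in x*y$ if and only if $\mu_{x,y}(z)\neq0$. *)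

theory Defs
  imports Main
begin

definition multisemigroup :: "'a set \<Rightarrow> ('a \<Rightarrow> 'a \<Rightarrow> 'a set) \<Rightarrow> bool" where
  "multisemigroup S mult \<longleftrightarrow>
     (\<forall>x\<in>S. \<forall>y\<in>S. mult x y \<subseteq> S) \<and>
     (\<forall>x\<in>S. \<forall>y\<in>S. \<forall>z\<in>S.
        (\<Union>s\<in>mult x y. mult s z) = (\<Union>t\<in>mult y z. mult x t))"

text \<open>All values mu r s t are required to be finite, so they are natural numbers;
  with finite supports all sums involved are finite sums of naturals, which
  coincide with the truncated cardinal sums.\<close>
definition finitary_multisemigroup_mult :: "'a set \<Rightarrow> ('a \<Rightarrow> 'a \<Rightarrow> 'a \<Rightarrow> nat) \<Rightarrow> bool" where
  "finitary_multisemigroup_mult S \<mu> \<longleftrightarrow>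
     S \<noteq> {} \<and>
     (\<forall>r\<in>S. \<forall>s\<in>S. finite {t\<in>S. \<mu> r s t \<noteq> 0}) \<and>
     (\<forall>r\<in>S. \<forall>s\<in>S. \<forall>t\<in>S. \<forall>u\<in>S.
        (\<Sum>i\<in>{i\<in>S. \<mu> s t i \<noteq> 0}. \<mu> s t i * \<mu> r i u)
      = (\<Sum>j\<in>{j\<in>S. \<mu> r s j \<noteq> 0}. \<mu> r s j * \<mu> j t u))"

definition deformation :: "'a set \<Rightarrow> ('a \<Rightarrow> 'a \<Rightarrow> 'a set) \<Rightarrow> ('a \<Rightarrow> 'a \<Rightarrow> 'a \<Rightarrow> nat) \<Rightarrow> bool" where
  "deformation S mult \<mu> \<longleftrightarrow>
     finitary_multisemigroup_mult S \<mu> \<and>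
     (\<forall>x\<in>S. \<forall>y\<in>S. \<forall>z\<in>S. z \<in> mult x y \<longleftrightarrow> \<mu> x y z \<noteq> 0)"

end

theory Submission
  imports Defs
begin

lemma key:
  fixes n p q :: nat
  assumes "n * p \<ge> p * n + q * p" "p > 0" "q > 0"
  shows False
  using assms by (simp add: mult.commute)

theorem corollary13:
  fixes S :: "'a set" and mult :: "'a \<Rightarrow> 'a \<Rightarrow> 'a set" and a b :: 'a
  assumes "finite S" and "multisemigroup S mult"
    and "a \<in> S" and "b \<in> S" and "a \<noteq> b"
    and "mult a a = {a}"
    and "{a, b} \<subseteq> mult a b \<or> {a, b} \<subseteq> mult b a"
  shows "\<not> (\<exists>\<mu>. deformation S mult \<mu>)"
proof
  assume "\<exists>\<mu>. deformation S mult \<mu>"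
  then obtain \<mu> where d: "deformation S mult \<mu>" by blast
  have fin: "\<forall>r\<in>S. \<forall>s\<in>S. finite {t\<in>S. \<mu> r s t \<noteq> 0}"
   and ass: "\<forall>r\<in>S. \<forall>s\<in>S. \<forall>t\<in>S. \<forall>u\<in>S.
        (\<Sum>i\<in>{i\<in>S. \<mu> s t i \<noteq> 0}. \<mu> s t i * \<mu> r i u)
      = (\<Sum>j\<in>{j\<in>S. \<mu> r s j \<noteq> 0}. \<mu> r s j * \<mu> j t u)"
   and mem: "\<forall>x\<in>S. \<forall>y\<in>S. \<forall>z\<in>S. z \<in> mult x y \<longleftrightarrow> \<mu> x y z \<noteq> 0"
    using d unfolding deformation_def finitary_multisemigroup_mult_def by auto
  define n where "n = \<mu> a a a"
  have npos: "n > 0" using mem assms(3,6) n_def by auto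
  have supp: "{i\<in>S. \<mu> a a i \<noteq> 0} = {a}" using mem assms(3,6) by auto
  have gen: "n * \<mu> x y u = (\<Sum>i\<in>{i\<in>S. \<mu> x y i \<noteq> 0}. \<mu> x y i * \<mu> a i u)"
    if "x = a" "y = b" "u \<in> S" for x y u
    using ass[rule_format, of a a b u] assms(3,4) that supp n_def by simp
  show False
    using assms(7)
  proof
    assume h: "{a, b} \<subseteq> mult a b"
    let ?F = "{i\<in>S. \<mu> a b i \<noteq> 0}"
    have ab: "\<mu> a b a > 0" "\<mu> a b b > 0" using h mem assms(3,4) by auto
    have sub: "{a,b} \<subseteq> ?F" using ab assms(3,4) by auto
    have "(\<Sum>i\<in>{a,b}. \<mu> a b i * \<mu> a i a) \<le> (\<Sum>i\<in>?F. \<mu> a b i * \<mu> a i a)"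
      by (rule sum_mono2) (use fin assms(3,4) sub in auto)
    also have "\<dots> = n * \<mu> a b a" using gen[of a b a] assms(3) by simp
    finally have "\<mu> a b a * n + \<mu> a b b * \<mu> a b a \<le> n * \<mu> a b a"
      using assms(5) n_def by simp
    then show False using key ab by blast
  next
    assume h: "{a, b} \<subseteq> mult b a"
    let ?F = "{i\<in>S. \<mu> b a i \<noteq> 0}"
    have ab: "\<mu> b a a > 0" "\<mu> b a b > 0" using h mem assms(3,4) by auto
    have sub: "{a,b} \<subseteq> ?F" using ab assms(3,4) by auto
    have e: "n * \<mu> b a a = (\<Sum>j\<in>?F. \<mu> b a j * \<mu> j a a)"
      using ass[rule_format, of b a a a] assms(3,4) supp n_def by simp
    have "(\<Sum>i\<in>{a,b}. \<mu> b a i * \<mu> i a a) \<le> (\<Sum>i\<in>?F. \<mu> b a i * \<mu> i a a)"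
      by (rule sum_mono2) (use fin assms(3,4) sub in auto)
    also have "\<dots> = n * \<mu> b a a" using e by simp
    finally have "\<mu> b a a * n + \<mu> b a b * \<mu> b a a \<le> n * \<mu> b a a"
      using assms(5) n_def by simp
    then show False using key ab by blast
  qed
qed

end
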